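(* For all relatively prime integers $p \geq 1$ and $q$, one has $\Delta(p,q) \leq p/4$, where $\Delta(p,q) = \max \mathcal{D}(L(p,q)) - \min \mathcal{D}(L(p,q))$.
   Context: $L(p,q)$ denotes the lens space obtained by $p/q$ Dehn surgery on the unknot in $S^3$. For a rational homology sphere $Y$, $\mathcal{D}(Y)$ denotes the multiset of Heegaard Floer correction terms $d(Y,\mathfrak{s})$, $\mathfrak{s} \in \mathrm{Spin}^c(Y)$, so $\Delta(p,q)$ is the range (maximum minus minimum) of the correction terms of $L(p,q)$. *)

theory Defs
  imports Complex_Main
begin

text \<open>Heegaard Floer correction terms of lens spaces, via the Ozsvath-Szabo
recursive formula: for p > q > 0 coprime and 0 \<le> i < p + q,
  d(-L(p,q), i) = ((2i+1-p-q)^2 - pq)/(4pq) - d(-L(q, p mod q), i mod q),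
with d(-L(1,q), 0) = d(S^3) = 0.  Here dneg p q i is d(-L(p, q mod p), i).\<close>

function dneg :: "nat \<Rightarrow> nat \<Rightarrow> nat \<Rightarrow> real" where
  "dneg p q i =
     (if p \<le> 1 then 0
      else (let q' = q mod p in
        ((2 * real i + 1 - real p - real q')^2 - real p * real q') / (4 * real p * real q')
        - dneg q' (p mod q') (i mod q')))"
  by pat_completeness auto
termination
  by (relation "measure (\<lambda>(p, q, i). p)") auto

text \<open>Correction term d(L(p,q), s_i) of the lens space L(p,q), p \<ge> 1, q an
arbitrary integer coprime to p (only q mod p matters); Spin^c structures are
labelled by i \<in> {0..<p}.\<close>
definition lens_d :: "int \<Rightarrow> int \<Rightarrow> nat \<Rightarrow> real" where
  "lens_d p q i = - dneg (nat p) (nat (q mod p)) i"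

text \<open>The set of values of the multiset D(L(p,q)) (max/min depend only on it).\<close>
definition lens_D :: "int \<Rightarrow> int \<Rightarrow> real set" where
  "lens_D p q = lens_d p q ` {0..<nat p}"

definition Delta :: "int \<Rightarrow> int \<Rightarrow> real" where
  "Delta p q = Max (lens_D p q) - Min (lens_D p q)"

end

theory Submission
  imports Defs
begin
declare dneg.simps[simp del]

lemma dneg_le1: "p \<le> 1 \<Longrightarrow> dneg p q i = 0"
  by (subst dneg.simps) simp

lemma dneg_rec: "2 \<le> p \<Longrightarrow> dneg p q i =
  ((2 * real i + 1 - real p - real (q mod p))^2 - real p * real (q mod p)) / (4 * real p * real (q mod p))
  - dneg (q mod p) (p mod (q mod p)) (i mod (q mod p))"
  by (subst dneg.simps) (simp add: Let_def)

lemma dneg_mod: "dneg p (q mod p) i = dneg p q i"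
  by (cases "p \<le> 1") (simp_all add: dneg_le1 dneg_rec)

lemma d52: "i < 5 \<Longrightarrow> \<bar>dneg 5 2 i\<bar> \<le> 1/2"
proof -
  assume "i < 5"
  hence "i = 0 \<or> i = 1 \<or> i = 2 \<or> i = 3 \<or> i = 4" by auto
  thus ?thesis by (elim disjE) (simp_all add: dneg_rec dneg_le1)
qed

lemma d53: "i < 5 \<Longrightarrow> \<bar>dneg 5 3 i\<bar> \<le> 1/2"
proof -
  assume "i < 5"
  hence "i = 0 \<or> i = 1 \<or> i = 2 \<or> i = 3 \<or> i = 4" by auto
  thus ?thesis by (elim disjE) (simp_all add: dneg_rec dneg_le1)
qed

lemma sqdiff:
  fixes x y c D M :: real
  assumes "D > 0" "\<bar>x\<bar> \<le> M"
  shows "(x^2 - c)/D - (y^2 - c)/D \<le> M^2/D"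
proof -
  have "x^2 \<le> M^2" using assms(2) by (metis abs_le_square_iff abs_of_nonneg abs_ge_zero order_trans)
  moreover have "y^2 \<ge> 0" by simp
  ultimately have "(x^2 - c) - (y^2 - c) \<le> M^2" by linarith
  then have "((x^2 - c) - (y^2 - c))/D \<le> M^2/D" using assms(1) by (simp add: divide_right_mono)
  then show ?thesis by (simp add: diff_divide_distrib)
qed

lemma ineq5:
  fixes p q :: real
  assumes "5 \<le> q" "2*q < p"
  shows "(p+q-1)^2 \<le> p*q*(p-q)"
proof -
  define s where "s = p - 2*q"
  have s: "s > 0" using assms s_def by simp
  have p: "p = 2*q+s" using s_def by simp
  have a: "2*q^3 - 9*q^2 \<ge> 0" using assms
    by (simp add: power2_eq_square power3_eq_cube mult_right_mono)
  have b: "3*q*s*(q-2) \<ge> 0" using assms s by simp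
  have c: "s^2*(q-1) \<ge> 0" using assms s by simp
  have "p*q*(p-q) - (p+q-1)^2 = (2*q^3 - 9*q^2) + 3*q*s*(q-2) + s^2*(q-1) + (6*q + 2*s - 1)"
    unfolding p by (simp add: algebra_simps power2_eq_square power3_eq_cube)
  moreover have "6*q + 2*s - 1 \<ge> 0" using assms s by simp
  ultimately show ?thesis using a b c by linarith
qed

lemma ineq:
  fixes p q :: nat
  assumes "2 \<le> q" "2*q < p" "\<not> (p = 5 \<and> q = 2)" "\<not> (p = 6 \<and> q = 2)"
  shows "(real p+real q-1)^2 \<le> real p*real q*(real p-real q)"
proof -
  consider "q = 2" | "q = 3" | "q = 4" | "q \<ge> 5" using assms by linarith
  then show ?thesis
  proof cases
    case 1
    then have "p \<ge> 7" using assms by auto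
    then have "real p \<ge> 7" by simp
    then have h: "7 * real p \<le> real p * real p" by (simp add: mult_right_mono)
    show ?thesis using 1 \<open>real p \<ge> 7\<close> by (simp add: power2_eq_square algebra_simps, insert h, linarith)
  next
    case 2
    then have "real p \<ge> 7" using assms by simp
    then have h: "7 * real p \<le> real p * real p" by (simp add: mult_right_mono)
    show ?thesis using 2 \<open>real p \<ge> 7\<close> by (simp add: power2_eq_square algebra_simps, insert h, linarith)
  next
    case 3
    then have "real p \<ge> 9" using assms by simp
    then have h: "9 * real p \<le> real p * real p" by (simp add: mult_right_mono)
    show ?thesis using 3 \<open>real p \<ge> 9\<close> by (simp add: power2_eq_square algebra_simps, insert h, linarith)
  next
    case 4
    then show ?thesis using ineq5[of "real q" "real p"] assms by simp
  qed
qed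

lemma ident1:
  fixes i Q r p :: real
  assumes "Q > 0" "r > 0" "p = Q + r"
  shows "((2*i+1-p-Q)^2 - p*Q)/(4*p*Q) - ((2*i+1-Q-r)^2 - Q*r)/(4*Q*r)
     = 1/4 - (2*i+1-Q)^2/(4*p*r)"
proof -
  have "p > 0" using assms by simp
  then have "((2*i+1-p-Q)^2 - p*Q)/(4*p*Q) - ((2*i+1-Q-r)^2 - Q*r)/(4*Q*r) - (1/4 - (2*i+1-Q)^2/(4*p*r))
     = (((2*i+1-p-Q)^2 - p*Q)*r - ((2*i+1-Q-r)^2 - Q*r)*p - p*Q*r + (2*i+1-Q)^2*Q)/(4*p*Q*r)"
    using assms(1,2) by (simp add: field_simps)
  also have "\<dots> = 0" using assms by (simp add: power2_eq_square algebra_simps)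
  finally show ?thesis by simp
qed

lemma ident2:
  fixes i Q r p :: real
  assumes "Q > 0" "r > 0" "p = Q + r"
  shows "((2*(i+Q)+1-p-Q)^2 - p*Q)/(4*p*Q) - ((2*i+1-Q-r)^2 - Q*r)/(4*Q*r)
     = 1/4 - (2*i+1-p-r)^2/(4*p*r)"
proof -
  have "p > 0" using assms by simp
  then have "((2*(i+Q)+1-p-Q)^2 - p*Q)/(4*p*Q) - ((2*i+1-Q-r)^2 - Q*r)/(4*Q*r) - (1/4 - (2*i+1-p-r)^2/(4*p*r))
     = (((2*(i+Q)+1-p-Q)^2 - p*Q)*r - ((2*i+1-Q-r)^2 - Q*r)*p - p*Q*r + (2*i+1-p-r)^2*Q)/(4*p*Q*r)"
    using assms(1,2) by (simp add: field_simps)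
  also have "\<dots> = 0" using assms by (simp add: power2_eq_square algebra_simps)
  finally show ?thesis by simp
qed

lemma lin:
  fixes d F G X P Q :: real
  assumes "d = F + G" "F \<le> X" "X \<le> (P - Q)/4" "G \<le> Q/4"
  shows "d \<le> P/4"
  using assms by (simp add: field_simps)

lemma main: "\<forall>q i j. coprime p q \<longrightarrow> 1 \<le> p \<longrightarrow> i < p \<longrightarrow> j < p \<longrightarrow>
   dneg p q i - dneg p q j \<le> real p / 4"
proof (induction p rule: less_induct)
  case (less p)
  show ?case
  proof (intro allI impI)
    fix q i j assume cop: "coprime p q" and p1: "1 \<le> p" and ij: "i < p" "j < p"
    show "dneg p q i - dneg p q j \<le> real p / 4"
    proof (cases "p = 1")
      case True then show ?thesis by (simp add: dneg_le1)
    next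
      case False
      hence p2: "2 \<le> p" using p1 by auto
      define Q where "Q = q mod p"
      have copQ: "coprime p Q" using cop p2 unfolding Q_def
        by (metis coprime_commute coprime_mod_left_iff not_numeral_le_zero le_0_eq)
      have Qlt: "Q < p" using p2 Q_def by simp
      have Q1: "Q \<ge> 1"
      proof (rule ccontr)
        assume "\<not> Q \<ge> 1" then have "Q = 0" by simp
        then show False using copQ p2 by simp
      qed
      define r where "r = p mod Q"
      have Di: "dneg p q k = ((2*real k+1-real p-real Q)^2 - real p*real Q)/(4*real p*real Q)
                 - dneg Q r (k mod Q)" for k
        using dneg_rec[OF p2, of q k] unfolding Q_def r_def by simp
      have copQr: "coprime Q r" unfolding r_def using copQ Q1
        by (metis coprime_commute coprime_mod_left_iff not_one_le_zero)
      have pos: "real p > 0" "real Q > 0" using p2 Q1 by auto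
      consider "Q = 1" | "2 \<le> Q" "2*Q < p" | "2*Q > p"
      proof -
        have "2*Q \<noteq> p \<or> Q = 1"
        proof (rule ccontr)
          assume "\<not> (2*Q \<noteq> p \<or> Q = 1)"
          then have "Q dvd p" "Q \<noteq> 1" by auto
          then show False using copQ by (metis coprime_common_divisor_nat coprime_def coprime_absorb_left)
        qed
        then show ?thesis using that Q1 by linarith
      qed
      then show ?thesis
      proof cases
        case 1
        have "dneg p q i - dneg p q j = ((2*real i+1-real p-real Q)^2 - real p*real Q)/(4*real p*real Q)
            - ((2*real j+1-real p-real Q)^2 - real p*real Q)/(4*real p*real Q)"
          using Di[of i] Di[of j] 1 by (simp add: dneg_le1)
        also have "\<dots> \<le> (real p)^2/(4*real p*real Q)"
          by (rule sqdiff) (use pos ij 1 in auto)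
        also have "\<dots> = real p / 4" using 1 pos by (simp add: power2_eq_square)
        finally show ?thesis .
      next
        case 2
        have diff: "dneg p q i - dneg p q j = (((2*real i+1-real p-real Q)^2 - real p*real Q)/(4*real p*real Q)
            - ((2*real j+1-real p-real Q)^2 - real p*real Q)/(4*real p*real Q))
            + (dneg Q r (j mod Q) - dneg Q r (i mod Q))"
          using Di[of i] Di[of j] by simp
        show ?thesis
        proof (cases "p = 5 \<and> Q = 2")
          case True
          have "dneg p q i = dneg 5 2 i" "dneg p q j = dneg 5 2 j"
            using True dneg_mod[of p q] unfolding Q_def by metis+
          then show ?thesis using d52[of i] d52[of j] ij True by auto
        next
          case False
          have n6: "\<not> (p = 6 \<and> Q = 2)" using copQ by auto
          have IH: "dneg Q r (j mod Q) - dneg Q r (i mod Q) \<le> real Q / 4"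
            using less.IH[OF Qlt] copQr Q1 by auto
          have A: "((2*real i+1-real p-real Q)^2 - real p*real Q)/(4*real p*real Q)
            - ((2*real j+1-real p-real Q)^2 - real p*real Q)/(4*real p*real Q)
            \<le> (real p + real Q - 1)^2/(4*real p*real Q)"
            by (rule sqdiff) (use pos ij Q1 in auto)
          have "(real p + real Q - 1)^2 \<le> real p*real Q*(real p-real Q)"
            using ineq[of Q p] 2 False n6 by auto
          then have B: "(real p + real Q - 1)^2/(4*real p*real Q) \<le> (real p - real Q)/4"
            using pos by (subst pos_divide_le_eq) (simp_all add: algebra_simps)
          show ?thesis by (rule lin[OF diff A B IH])
        qed
      next
        case 3
        have Q2: "Q \<ge> 2" using 3 p2 by linarith
        have rdef: "r = p - Q" unfolding r_def using 3 Qlt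
          by (simp add: mod_if le_mod_geq)
        have r1: "r \<ge> 1"
        proof (rule ccontr)
          assume "\<not> r \<ge> 1" then have "p = Q" using rdef Qlt by simp
          then show False using Qlt by simp
        qed
        define s where "s = Q mod r"
        have rQ: "r mod Q = r" using rdef 3 by simp
        have DQ: "dneg Q r k = ((2*real k+1-real Q-real r)^2 - real Q*real r)/(4*real Q*real r)
                 - dneg r s (k mod r)" for k
          using dneg_rec[OF Q2, of r k] rQ unfolding s_def by simp
        have rpos: "real r > 0" using r1 by simp
        have preal: "real p = real Q + real r" using rdef Qlt by simp
        have rep: "\<exists>z k. \<bar>z\<bar> \<le> real p + real r - 1 \<and> k < r \<and>
                    dneg p q x = 1/4 - z^2/(4*real p*real r) + dneg r s k" if x: "x < p" for x
        proof (cases "x < Q")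
          case True
          have "dneg p q x = 1/4 - (2*real x+1-real Q)^2/(4*real p*real r) + dneg r s (x mod r)"
            using Di[of x] DQ[of x] True ident1[OF pos(2) rpos preal, of "real x"] by simp
          moreover have "\<bar>2*real x+1-real Q\<bar> \<le> real p + real r - 1" using True preal rpos by auto
          ultimately show ?thesis using r1 by (metis mod_less_divisor less_le_trans zero_less_one)
        next
          case False
          define k where "k = x - Q"
          have k: "k < r" "x = k + Q" using False x rdef k_def by auto
          have km: "x mod Q = k" using k 3 rdef by (simp add: mod_if)
          have "dneg p q x = 1/4 - (2*real k+1-real p-real r)^2/(4*real p*real r) + dneg r s k"
            using Di[of x] DQ[of k] km k ident2[OF pos(2) rpos preal, of "real k"] by simp
          moreover have "\<bar>2*real k+1-real p-real r\<bar> \<le> real p + real r - 1" using k preal rpos by auto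
          ultimately show ?thesis using k by blast
        qed
        obtain zi ki where zi: "\<bar>zi\<bar> \<le> real p + real r - 1" "ki < r"
            "dneg p q i = 1/4 - zi^2/(4*real p*real r) + dneg r s ki" using rep[OF ij(1)] by blast
        obtain zj kj where zj: "\<bar>zj\<bar> \<le> real p + real r - 1" "kj < r"
            "dneg p q j = 1/4 - zj^2/(4*real p*real r) + dneg r s kj" using rep[OF ij(2)] by blast
        have pr: "4*real p*real r > 0" using pos rpos by simp
        have A: "(zj^2 - 0)/(4*real p*real r) - (zi^2 - 0)/(4*real p*real r) \<le> (real p + real r - 1)^2/(4*real p*real r)"
          by (rule sqdiff[OF pr zj(1)])
        have diff: "dneg p q i - dneg p q j = (zj^2 - 0)/(4*real p*real r) - (zi^2 - 0)/(4*real p*real r)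
                     + (dneg r s ki - dneg r s kj)" using zi zj by simp
        show ?thesis
        proof (cases "r = 1")
          case True
          have "dneg r s ki - dneg r s kj = 0" using True by (simp add: dneg_le1)
          moreover have "(real p + real r - 1)^2/(4*real p*real r) = real p / 4"
            using True pos by (simp add: power2_eq_square)
          ultimately show ?thesis using diff A by linarith
        next
          case False
          hence r2: "r \<ge> 2" using r1 by simp
          have copr: "coprime r s" unfolding s_def using copQ rdef Qlt r1
            by (metis coprime_commute coprime_mod_right_iff diff_diff_cancel
              diff_is_0_eq le_mod_geq less_or_eq_imp_le linorder_not_less)
          have IH: "dneg r s ki - dneg r s kj \<le> real r / 4"
            using less.IH[of r] copr r1 zi(2) zj(2) rdef Qlt Q1 by auto
          show ?thesis
          proof (cases "p = 5 \<and> r = 2")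
            case True
            then have "Q = 3" using rdef Qlt by presburger
            then have "dneg p q i = dneg 5 3 i" "dneg p q j = dneg 5 3 j"
              using True dneg_mod[of p q] unfolding Q_def by metis+
            then show ?thesis using d53[of i] d53[of j] ij True by auto
          next
            case False
            have n6: "\<not> (p = 6 \<and> r = 2)"
            proof
              assume "p = 6 \<and> r = 2"
              then have "p = 6" "Q = 4" using rdef Qlt by presburger+
              then show False using copQ coprime_common_divisor_nat[of 6 4 2] by simp
            qed
            have "(real p + real r - 1)^2 \<le> real p*real r*(real p-real r)"
              using ineq[of r p] r2 3 rdef False n6 by auto
            then have B: "(real p + real r - 1)^2/(4*real p*real r) \<le> (real p - real r)/4"
              using pos rpos by (subst pos_divide_le_eq) (simp_all add: algebra_simps)
            show ?thesis by (rule lin[OF diff A B IH])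
          qed
        qed
      qed
    qed
  qed
qed

lemma copr_nat: "(p::int) \<ge> 1 \<Longrightarrow> coprime p q \<Longrightarrow> coprime (nat p) (nat (q mod p))"
  by (smt (verit, del_insts) coprime_int_iff coprime_mod_right_iff nat_0_le pos_mod_sign)

theorem lemma3p1:
  fixes p q :: int
  assumes "p \<ge> 1" and "coprime p q"
  shows "Delta p q \<le> real_of_int p / 4"
proof -
  define S where "S = lens_D p q"
  have fin: "finite S" and ne: "S \<noteq> {}" unfolding S_def lens_D_def using assms(1) by auto
  obtain j where j: "j < nat p" "Max S = lens_d p q j"
    using Max_in[OF fin ne] unfolding S_def lens_D_def by auto
  obtain i where i: "i < nat p" "Min S = lens_d p q i"
    using Min_in[OF fin ne] unfolding S_def lens_D_def by auto
  have c: "coprime (nat p) (nat (q mod p))" using copr_nat assms by blast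
  have "dneg (nat p) (nat (q mod p)) i - dneg (nat p) (nat (q mod p)) j \<le> real (nat p) / 4"
    using main[of "nat p"] c i j assms(1) by auto
  moreover have "real (nat p) = real_of_int p" using assms(1) by simp
  ultimately show ?thesis unfolding Delta_def S_def[symmetric] using i j
    by (simp add: lens_d_def)
qed

end
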